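(* Let $A_1, A_2, A_3, \dots$ be independent and identically distributed real random variables, each with Gaussian distribution $\mathcal{N}(\mu,\sigma^2)$, $\sigma>0$. For $k\ge 2$ let $\mathbf A^{(k)}=(A_1,\dots,A_k)\in\mathbb R^k$ and $$S_k=\operatorname{softmax}_k(\mathbf A^{(k)})_1=\frac{e^{A_1}}{\sum_{j=1}^k e^{A_j}}.$$ For a threshold $\tau\in\mathbb R$ consider the binarized variable $\hat B_k(\tau)=\operatorname{sign}(S_k-\tau)\in\{-1,1\}$, and let $\tau_k$ be the threshold that maximizes the Shannon entropy $\mathcal H(\hat B_k(\tau))$ over $\tau\in\mathbb R$ (equivalently, the value with $P(S_k\le \tau_k)=\tfrac12$). Then the entropy-maximizing threshold is negatively correlated with the number of elements $k$: $\tau_{k+1}<\tau_k$ for every $k\ge 2$.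
   Context: $\operatorname{sign}(x)=1$ if $x\ge 0$ and $-1$ otherwise. The Shannon entropy of a random variable $B$ taking values in $\{-1,1\}$ is $\mathcal H(B)=-\sum_{b\in\{-1,1\}}p(b)\log p(b)$. *)

theory Defs
  imports "HOL-Probability.Probability"
begin

definition sign1 :: "real \<Rightarrow> real" where
  "sign1 x = (if x \<ge> 0 then 1 else -1)"

definition softmax1 :: "(nat \<Rightarrow> 'a \<Rightarrow> real) \<Rightarrow> nat \<Rightarrow> 'a \<Rightarrow> real" where
  "softmax1 A k w = exp (A 1 w) / (\<Sum>j=1..k. exp (A j w))"

definition binarized :: "(nat \<Rightarrow> 'a \<Rightarrow> real) \<Rightarrow> nat \<Rightarrow> real \<Rightarrow> 'a \<Rightarrow> real" where
  "binarized A k \<tau> w = sign1 (softmax1 A k w - \<tau>)"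

text \<open>Shannon entropy (natural log; 0 log 0 = 0 since 0 * _ = 0) of B_k(tau)
  under the probability measure M\<close>
definition binarized_entropy :: "'a measure \<Rightarrow> (nat \<Rightarrow> 'a \<Rightarrow> real) \<Rightarrow> nat \<Rightarrow> real \<Rightarrow> real" where
  "binarized_entropy M A k \<tau> =
     - (\<Sum>b\<in>{-1, 1::real}.
          measure M {w \<in> space M. binarized A k \<tau> w = b} *
          ln (measure M {w \<in> space M. binarized A k \<tau> w = b}))"

definition entropy_max_threshold :: "'a measure \<Rightarrow> (nat \<Rightarrow> 'a \<Rightarrow> real) \<Rightarrow> nat \<Rightarrow> real \<Rightarrow> bool" where
  "entropy_max_threshold M A k \<tau> \<longleftrightarrow>
     (\<forall>t. binarized_entropy M A k t \<le> binarized_entropy M A k \<tau>)"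

end

theory Submission
  imports Defs
begin


lemma atom_zero:
  fixes X W :: "'a \<Rightarrow> real" and g :: "real \<Rightarrow> real"
  assumes P: "prob_space M" and ind: "prob_space.indep_var M borel X borel W"
    and d: "distributed M lborel X f" and g[measurable]: "g \<in> borel_measurable borel"
  shows "measure M {w\<in>space M. X w = g (W w)} = 0"
proof -
  interpret prob_space M by (rule P)
  let ?DX = "distr M borel X" and ?DW = "distr M borel W"
  have rvX[measurable]: "X \<in> borel_measurable M" and rvW[measurable]: "W \<in> borel_measurable M"
   and eq: "?DX \<Otimes>\<^sub>M ?DW = distr M (borel \<Otimes>\<^sub>M borel) (\<lambda>x. (X x, W x))"
    using ind unfolding indep_var_distribution_eq by auto
  interpret X: prob_space ?DX by (rule prob_space_distr) fact
  interpret Y: prob_space ?DW by (rule prob_space_distr) fact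
  interpret XY: pair_prob_space ?DX ?DW ..
  define G where "G = {p \<in> space (borel \<Otimes>\<^sub>M borel :: (real \<times> real) measure). fst p = g (snd p)}"
  have G[measurable]: "G \<in> sets (borel \<Otimes>\<^sub>M borel)" unfolding G_def by measurable
  have DX: "?DX = density lborel f"
  proof -
    have "?DX = distr M lborel X" by (rule distr_cong) auto
    also have "\<dots> = density lborel f" using d by (simp add: distributed_distr_eq_density)
    finally show ?thesis .
  qed
  have single: "emeasure ?DX {a} = 0" for a
  proof -
    have "emeasure ?DX {a} = (\<integral>\<^sup>+x. f x * indicator {a} x \<partial>lborel)"
      unfolding DX by (rule emeasure_density) (use d in \<open>auto simp: distributed_def\<close>)
    also have "\<dots> = 0"
    proof -
      have fm: "f \<in> borel_measurable lborel" using d by (auto simp: distributed_def)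
      show ?thesis
        using AE_lborel_singleton[of a] fm by (subst nn_integral_0_iff_AE) (auto elim!: eventually_mono)
    qed
    finally show ?thesis .
  qed
  have "emeasure M {w\<in>space M. X w = g (W w)} = emeasure M ((\<lambda>x. (X x, W x)) -` G \<inter> space M)"
    by (rule arg_cong[where f="emeasure M"]) (auto simp: G_def space_pair_measure)
  also have "\<dots> = emeasure (distr M (borel \<Otimes>\<^sub>M borel) (\<lambda>x. (X x, W x))) G"
    by (rule emeasure_distr[symmetric]) auto
  also have "\<dots> = emeasure (?DX \<Otimes>\<^sub>M ?DW) G" by (simp add: eq)
  also have "\<dots> = (\<integral>\<^sup>+y. emeasure ?DX ((\<lambda>x. (x, y)) -` G) \<partial>?DW)"
    by (rule XY.emeasure_pair_measure_alt2) (simp add: G)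
  also have "\<dots> = (\<integral>\<^sup>+y. emeasure ?DX {g y} \<partial>?DW)"
    by (rule nn_integral_cong) (auto simp: G_def space_pair_measure intro!: arg_cong[where f="emeasure ?DX"])
  also have "\<dots> = 0" by (simp add: single)
  finally show ?thesis by (simp add: measure_def)
qed

lemma interval_pos:
  assumes P: "prob_space M" and d: "distributed M lborel X (\<lambda>x. ennreal (normal_density \<mu> \<sigma> x))"
    and s: "\<sigma> > 0" and ab: "a < b"
  shows "measure M (X -` {a..b} \<inter> space M) > 0"
proof -
  interpret prob_space M by (rule P)
  have e: "emeasure M (X -` {a..b} \<inter> space M) = (\<integral>\<^sup>+x. ennreal (normal_density \<mu> \<sigma> x) * indicator {a..b} x \<partial>lborel)"
    using d by (rule distributed_emeasure) simp
  have "(\<integral>\<^sup>+x. ennreal (normal_density \<mu> \<sigma> x) * indicator {a..b} x \<partial>lborel) \<noteq> 0"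
  proof
    assume "(\<integral>\<^sup>+x. ennreal (normal_density \<mu> \<sigma> x) * indicator {a..b} x \<partial>lborel) = 0"
    then have "AE x in lborel. ennreal (normal_density \<mu> \<sigma> x) * indicator {a..b} x = 0"
      by (subst (asm) nn_integral_0_iff_AE) auto
    then have "AE x in lborel. x \<notin> {a..b}"
    proof (rule eventually_mono)
      fix x assume h: "ennreal (normal_density \<mu> \<sigma> x) * indicator {a..b} x = 0"
      have "normal_density \<mu> \<sigma> x > 0" by (rule normal_density_pos[OF s])
      then show "x \<notin> {a..b}" using h by (auto simp: indicator_def split: if_splits)
    qed
    then obtain N where N: "{x \<in> space lborel. \<not> x \<notin> {a..b}} \<subseteq> N" "N \<in> null_sets lborel"
      by (rule AE_E) blast
    then have "emeasure lborel {a..b} \<le> emeasure lborel N"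
      by (intro emeasure_mono) auto
    with N ab show False by auto
  qed
  with e have "emeasure M (X -` {a..b} \<inter> space M) \<noteq> 0" by simp
  then show ?thesis by (simp add: emeasure_eq_measure zero_less_measure_iff)
qed

lemma ln_gt: "0 < (x::real) \<Longrightarrow> x \<noteq> 1 \<Longrightarrow> ln x > 1 - 1/x"
proof -
  assume x: "0 < x" "x \<noteq> 1"
  have "ln (1/x) \<le> 1/x - 1" using x by (intro ln_le_minus_one) auto
  moreover have "ln (1/x) \<noteq> 1/x - 1" using ln_eq_minus_one[of "1/x"] x by auto
  ultimately show ?thesis using x by (simp add: ln_div)
qed

definition H :: "real \<Rightarrow> real" where "H p = - (p * ln p + (1 - p) * ln (1 - p))"

lemma H_half: "H (1/2) = ln 2"
  by (simp add: H_def ln_div)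

lemma H_less: assumes "0 \<le> p" "p \<le> 1" "p \<noteq> 1/2" shows "H p < ln 2"
proof (cases "p = 0 \<or> p = 1")
  case True then show ?thesis by (auto simp: H_def)
next
  case False
  then have p: "0 < p" "p < 1" using assms by auto
  have 1: "ln (2*p) > 1 - 1/(2*p)" using p assms by (intro ln_gt) auto
  have 2: "ln (2*(1-p)) > 1 - 1/(2*(1-p))" using p assms by (intro ln_gt) auto
  have "p * ln (2*p) > p * (1 - 1/(2*p))" using 1 p by (intro mult_strict_left_mono) auto
  moreover have "(1-p) * ln (2*(1-p)) > (1-p) * (1 - 1/(2*(1-p)))" using 2 p by (intro mult_strict_left_mono) auto
  moreover have "p * (1 - 1/(2*p)) + (1-p) * (1 - 1/(2*(1-p))) = 0" using p by (simp add: field_simps)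
  moreover have "ln (2*p) = ln 2 + ln p" "ln (2*(1-p)) = ln 2 + ln (1-p)"
    using p ln_mult[of 2 p] ln_mult[of 2 "1-p"] by simp_all
  ultimately show ?thesis unfolding H_def by (simp add: algebra_simps)
qed



lemma key1: "(0::real) < m \<Longrightarrow> m < 1 \<Longrightarrow> X > (m/(1-m)) * Y \<Longrightarrow> Y > 0 \<Longrightarrow> X > 0 \<Longrightarrow> m < X/(X+Y)"
  by (simp add: field_simps)

lemma key2: "(0::real) < m \<Longrightarrow> m < 1 \<Longrightarrow> X \<le> (m/(1-m)) * W \<Longrightarrow> W > 0 \<Longrightarrow> X > 0 \<Longrightarrow> X/(X+W) \<le> m"
  by (simp add: field_simps)


lemma frac01: "(a::real) > 0 \<Longrightarrow> b > 0 \<Longrightarrow> 0 < a / (a + b) \<and> a / (a + b) < 1"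
  by (auto simp: divide_less_eq)

context
  fixes M :: "'a measure" and A :: "nat \<Rightarrow> 'a \<Rightarrow> real" and \<mu> \<sigma> :: real
  assumes P: "prob_space M"
    and sig: "\<sigma> > 0"
    and ind: "prob_space.indep_vars M (\<lambda>_. borel) A {1..}"
    and dist: "\<And>i. i \<ge> 1 \<Longrightarrow> distributed M lborel (A i) (\<lambda>x. ennreal (normal_density \<mu> \<sigma> x))"
begin

interpretation prob_space M by (rule P)

lemma measA: "i \<ge> 1 \<Longrightarrow> A i \<in> borel_measurable M"
  using distributed_measurable[OF dist] by simp

lemma softmax_split: "j \<ge> 1 \<Longrightarrow>
  softmax1 A j w = exp (A 1 w) / (exp (A 1 w) + (\<Sum>i=2..j. exp (A i w)))"
  unfolding softmax1_def by (subst sum.atLeast_Suc_atMost) (auto simp: numeral_2_eq_2)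

lemma Y_pos: "j \<ge> 2 \<Longrightarrow> (\<Sum>i=2..j. exp (A i w)) > 0"
  by (intro sum_pos) auto

lemma S_bounds: "j \<ge> 2 \<Longrightarrow> 0 < softmax1 A j w \<and> softmax1 A j w < 1"
proof -
  assume j: "j \<ge> 2"
  show ?thesis using frac01[OF exp_gt_zero Y_pos[OF j]] softmax_split[of j w] j by simp
qed

lemma S_meas: "softmax1 A j \<in> borel_measurable M"
proof -
  have "\<And>i. i \<in> {1..j} \<Longrightarrow> (\<lambda>w. exp (A i w)) \<in> borel_measurable M"
    using measA by (auto intro!: borel_measurable_exp measurable_compose[OF _ borel_measurable_exp])
  moreover have "(\<lambda>w. exp (A 1 w)) \<in> borel_measurable M"
    using measA[of 1] by (auto intro: measurable_compose[OF _ borel_measurable_exp])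
  ultimately show "softmax1 A j \<in> borel_measurable M" by (unfold softmax1_def) (intro borel_measurable_divide borel_measurable_sum, auto)
qed

lemma expA_meas: "i \<ge> 1 \<Longrightarrow> (\<lambda>w. exp (A i w)) \<in> borel_measurable M"
  using measA by (auto intro: measurable_compose[OF _ borel_measurable_exp])

lemma sumexp_meas: "m \<ge> 1 \<Longrightarrow> (\<lambda>w. \<Sum>i\<in>{m..n}. exp (A i w)) \<in> borel_measurable M"
  by (intro borel_measurable_sum expA_meas) auto

lemma S_mono: "j \<ge> 2 \<Longrightarrow> softmax1 A (Suc j) w < softmax1 A j w"
proof -
  assume j: "j \<ge> 2"
  have "softmax1 A (Suc j) w = exp (A 1 w) / ((\<Sum>i=1..j. exp (A i w)) + exp (A (Suc j) w))"
    unfolding softmax1_def using j by simp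
  also have "\<dots> < exp (A 1 w) / (\<Sum>i=1..j. exp (A i w))"
    using j by (intro divide_strict_left_mono sum_pos add_pos_pos mult_pos_pos) auto
  finally show ?thesis unfolding softmax1_def .
qed

lemma S_atom:
  assumes j: "j \<ge> 2"
  shows "measure M {w\<in>space M. softmax1 A j w = t} = 0"
proof (cases "0 < t \<and> t < 1")
  case False
  then have "{w\<in>space M. softmax1 A j w = t} = {}" using S_bounds[OF j] by force
  then show ?thesis by (metis measure_empty)
next
  case True
  define V where "V i w = (if i = 1 then A i w else exp (A i w))" for i w
  have "indep_vars (\<lambda>_. borel) A {1..j}" using indep_vars_subset[OF ind] by auto
  then have "indep_vars (\<lambda>_. borel) (\<lambda>i w. (if i = 1 then (\<lambda>x. x) else exp) (A i w)) {1..j}"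
    by (rule indep_vars_compose2) auto
  moreover have "(\<lambda>i w. (if i = 1 then (\<lambda>x. x) else exp) (A i w)) = V"
    by (auto simp: V_def fun_eq_iff)
  moreover have "insert 1 {2..j} = {1..j}" using j by auto
  ultimately have "indep_vars (\<lambda>_. borel) V (insert 1 {2..j})" by simp
  then have "indep_var borel (V 1) borel (\<lambda>\<omega>. \<Sum>i\<in>{2..j}. V i \<omega>)"
    by (intro indep_vars_sum) auto
  moreover have "V 1 = A 1" by (auto simp: V_def fun_eq_iff)
  moreover have "(\<lambda>\<omega>. \<Sum>i\<in>{2..j}. V i \<omega>) = (\<lambda>\<omega>. \<Sum>i\<in>{2..j}. exp (A i \<omega>))"
    by (auto simp: V_def fun_eq_iff intro!: sum.cong)
  ultimately have iv: "indep_var borel (A 1) borel (\<lambda>\<omega>. \<Sum>i\<in>{2..j}. exp (A i \<omega>))" by simp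
  define c where "c = t / (1 - t)"
  have c: "c > 0" using True by (simp add: c_def)
  have z: "measure M {w\<in>space M. A 1 w = (\<lambda>y. ln (c * y)) (\<Sum>i\<in>{2..j}. exp (A i w))} = 0"
    by (rule atom_zero[OF P iv dist[of 1]]) auto
  have sub: "{w\<in>space M. softmax1 A j w = t} \<subseteq> {w\<in>space M. A 1 w = (\<lambda>y. ln (c * y)) (\<Sum>i\<in>{2..j}. exp (A i w))}"
  proof
    fix w assume ws: "w \<in> {w\<in>space M. softmax1 A j w = t}"
    then have w: "w \<in> space M" and s: "softmax1 A j w = t" by auto
    define e where "e = exp (A 1 w)"
    define Y where "Y = (\<Sum>i\<in>{2..j}. exp (A i w))"
    have e: "e > 0" "Y > 0" using Y_pos[OF j] by (auto simp: e_def Y_def)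
    have "e / (e + Y) = t" using s softmax_split[of j w] j by (simp add: e_def Y_def)
    then have "e = t * (e + Y)" using e by (simp add: field_simps)
    then have "e = c * Y" using True by (simp add: c_def field_simps)
    then have "ln e = ln (c * Y)" by simp
    then show "w \<in> {w\<in>space M. A 1 w = (\<lambda>y. ln (c * y)) (\<Sum>i\<in>{2..j}. exp (A i w))}"
      using w by (simp add: e_def Y_def)
  qed
  have "{w\<in>space M. A 1 w = (\<lambda>y. ln (c * y)) (\<Sum>i\<in>{2..j}. exp (A i w))} \<in> sets M"
    using measA[of 1] sumexp_meas[of 2 j]
    by (intro measurable_equality_set borel_measurable_ln borel_measurable_times borel_measurable_const) auto
  then have "measure M {w\<in>space M. softmax1 A j w = t} \<le> 0"
    using finite_measure_mono[OF sub] z by simp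
  then show ?thesis using measure_nonneg[of M] by (simp add: order_antisym)
qed

abbreviation "q j t \<equiv> measure M {w\<in>space M. softmax1 A j w \<le> t}"

lemma Sm: "softmax1 A j \<in> borel_measurable M"
  by (rule S_meas)

lemma entropy_eq:
  assumes j: "j \<ge> 2"
  shows "binarized_entropy M A j \<tau> = H (q j \<tau>)"
proof -
  have m[measurable]: "softmax1 A j \<in> borel_measurable M" by (rule Sm)
  have e1: "{w \<in> space M. binarized A j \<tau> w = 1} = space M - {w\<in>space M. softmax1 A j w < \<tau>}"
    by (auto simp: binarized_def sign1_def)
  have e2: "{w \<in> space M. binarized A j \<tau> w = -1} = {w\<in>space M. softmax1 A j w < \<tau>}"
    by (auto simp: binarized_def sign1_def)
  have lt: "measure M {w\<in>space M. softmax1 A j w < \<tau>} = q j \<tau>"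
  proof -
    have "{w\<in>space M. softmax1 A j w \<le> \<tau>} = {w\<in>space M. softmax1 A j w < \<tau>} \<union> {w\<in>space M. softmax1 A j w = \<tau>}"
      by auto
    then have "q j \<tau> = measure M {w\<in>space M. softmax1 A j w < \<tau>} + measure M {w\<in>space M. softmax1 A j w = \<tau>}"
      by (simp only:) (rule finite_measure_Union, auto)
    then show ?thesis using S_atom[OF j] by simp
  qed
  have "measure M {w \<in> space M. binarized A j \<tau> w = 1} = 1 - q j \<tau>"
    unfolding e1 by (subst prob_compl) (auto simp: lt)
  moreover have "measure M {w \<in> space M. binarized A j \<tau> w = -1} = q j \<tau>"
    unfolding e2 lt ..
  ultimately show ?thesis
    unfolding binarized_entropy_def H_def by simp
qed

lemma median_exists:
  assumes j: "j \<ge> 2"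
  shows "\<exists>\<tau>. q j \<tau> = 1/2"
proof -
  have m[measurable]: "softmax1 A j \<in> borel_measurable M" by (rule Sm)
  let ?D = "distr M borel (softmax1 A j)"
  interpret D: real_distribution ?D by (rule real_distribution_distr) simp
  have cdf: "cdf ?D t = q j t" for t
    unfolding cdf_def by (subst measure_distr) (auto intro!: arg_cong[where f="measure M"])
  have "isCont (cdf ?D) x" for x
  proof -
    have "measure ?D {x} = measure M {w\<in>space M. softmax1 A j w = x}"
      by (subst measure_distr) (auto intro!: arg_cong[where f="measure M"])
    then show ?thesis using S_atom[OF j] D.isCont_cdf by simp
  qed
  then have c: "continuous_on {0..1} (cdf ?D)" by (intro continuous_at_imp_continuous_on) auto
  have "q j 0 = 0"
  proof -
    have "{w\<in>space M. softmax1 A j w \<le> 0} = {}" using S_bounds[OF j, THEN conjunct1] by (auto simp: not_le)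
    then show ?thesis by (metis measure_empty)
  qed
  moreover have "q j 1 = 1"
  proof -
    have "{w\<in>space M. softmax1 A j w \<le> 1} = space M" using S_bounds[OF j]
      by (force simp: less_imp_le)
    then show ?thesis by (simp add: prob_space)
  qed
  ultimately obtain x where "cdf ?D x = 1/2"
    using IVT'[of "cdf ?D" 0 "1/2" 1] c cdf by auto
  then show ?thesis using cdf by auto
qed

lemma maxchar:
  assumes j: "j \<ge> 2"
  shows "entropy_max_threshold M A j \<tau> \<longleftrightarrow> q j \<tau> = 1/2"
proof -
  have Hle: "H (q j t) \<le> ln 2" for t
  proof (cases "q j t = 1/2")
    case True then show ?thesis using H_half by (metis order_refl)
  next
    case False then show ?thesis using H_less[of "q j t"] by (auto simp: measure_nonneg less_imp_le)
  qed
  obtain \<tau>0 where t0: "q j \<tau>0 = 1/2" using median_exists[OF j] by blast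
  show ?thesis
  proof
    assume "entropy_max_threshold M A j \<tau>"
    then have "H (q j \<tau>0) \<le> H (q j \<tau>)"
      unfolding entropy_max_threshold_def entropy_eq[OF j] by blast
    then have "ln 2 \<le> H (q j \<tau>)" using t0 H_half by simp
    then show "q j \<tau> = 1/2" using H_less[of "q j \<tau>"] by (force simp: measure_nonneg)
  next
    assume h: "q j \<tau> = 1/2"
    have "H (q j \<tau>) = ln 2" using h H_half by (metis)
    then show "entropy_max_threshold M A j \<tau>"
      unfolding entropy_max_threshold_def entropy_eq[OF j] using Hle by simp
  qed
qed


lemma gap_pos:
  assumes k: "k \<ge> 2" and m: "0 < m" "m < 1"
  shows "measure M {w\<in>space M. softmax1 A (Suc k) w \<le> m \<and> m < softmax1 A k w} > 0"
proof -
  define c where "c = m / (1 - m)"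
  have c: "c > 0" using m by (simp add: c_def)
  have k1: "real k - 1 > 0" using k by simp
  define L1 where "L1 = ln (c * (real k - 1)) + 2"
  define L2 where "L2 = ln (real k - 1) + 3"
  define lo where "lo i = (if i = 1 then L1 else if i = Suc k then L2 else 0)" for i
  define E where "E = (\<Inter>i\<in>{1..Suc k}. A i -` {lo i..lo i + 1} \<inter> space M)"
  have "prob E = (\<Prod>i\<in>{1..Suc k}. prob (A i -` {lo i..lo i + 1} \<inter> space M))"
    unfolding E_def by (rule indep_varsD[OF ind]) auto
  also have "\<dots> > 0"
    by (intro prod_pos ballI interval_pos[OF P dist sig]) auto
  finally have pE: "prob E > 0" .
  have sub: "E \<subseteq> {w\<in>space M. softmax1 A (Suc k) w \<le> m \<and> m < softmax1 A k w}"
  proof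
    fix w assume "w \<in> E"
    then have w: "w \<in> space M" and b: "\<And>i. i \<in> {1..Suc k} \<Longrightarrow> lo i \<le> A i w \<and> A i w \<le> lo i + 1"
      unfolding E_def by auto
    define X where "X = exp (A 1 w)"
    define Y where "Y = (\<Sum>i=2..k. exp (A i w))"
    define Z where "Z = exp (A (Suc k) w)"
    have Yp: "Y > 0" unfolding Y_def using Y_pos[OF k] .
    have Zp: "Z > 0" "X > 0" by (auto simp: Z_def X_def)
    have "Y \<le> of_nat (card {2..k}) * exp 1"
      unfolding Y_def
    proof (rule sum_bounded_above)
      fix i assume "i \<in> {2..k}"
      then have "A i w \<le> 1" using b[of i] by (auto simp: lo_def)
      then show "exp (A i w) \<le> exp 1" by simp
    qed
    then have Yb: "Y \<le> (real k - 1) * exp 1" using k by (simp add: of_nat_diff)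
    have "exp L1 \<le> X" using b[of 1] by (simp add: X_def lo_def)
    moreover have "exp L1 = c * (real k - 1) * exp 2" unfolding L1_def
      using c k1 by (simp add: exp_add)
    ultimately have Xl: "c * (real k - 1) * exp 2 \<le> X" by simp
    have "X \<le> exp (L1 + 1)" using b[of 1] by (simp add: X_def lo_def)
    moreover have "exp (L1 + 1) = c * (real k - 1) * exp 3" unfolding L1_def
      using c k1 by (simp add: exp_add mult.commute)
    ultimately have Xu: "X \<le> c * (real k - 1) * exp 3" by simp
    have "exp L2 \<le> Z" using b[of "Suc k"] k by (simp add: Z_def lo_def)
    moreover have "exp L2 = (real k - 1) * exp 3" unfolding L2_def
      using k1 by (simp add: exp_add)
    ultimately have Zl: "(real k - 1) * exp 3 \<le> Z" by simp
    have e12: "exp (1::real) < exp 2" by simp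
    have "c * Y \<le> c * ((real k - 1) * exp 1)" using Yb c by simp
    also have "\<dots> < c * ((real k - 1) * exp 2)" using c k1 e12 by simp
    finally have "c * Y < X" using Xl by (simp add: mult.assoc)
    then have s1: "m < X / (X + Y)" using key1[OF m _ Yp Zp(2)] by (simp add: c_def)
    have "c * ((real k - 1) * exp 3) \<le> c * Z" using mult_left_mono[OF Zl, of c] c by simp
    then have "X \<le> c * Z" using Xu by (simp add: mult.assoc)
    also have "\<dots> \<le> c * (Y + Z)" using c Yp by simp
    finally have s2: "X / (X + (Y + Z)) \<le> m" using key2[OF m _ _ Zp(2), of "Y + Z"] Yp Zp by (simp add: c_def)
    have "softmax1 A k w = X / (X + Y)" using softmax_split[of k w] k by (simp add: X_def Y_def)
    moreover have "softmax1 A (Suc k) w = X / (X + (Y + Z))"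
      using softmax_split[of "Suc k" w] k by (simp add: X_def Y_def Z_def)
    ultimately show "w \<in> {w\<in>space M. softmax1 A (Suc k) w \<le> m \<and> m < softmax1 A k w}"
      using s1 s2 w by simp
  qed
  have "{w\<in>space M. softmax1 A (Suc k) w \<le> m \<and> m < softmax1 A k w} \<in> sets M"
    using Sm[of k] Sm[of "Suc k"] by measurable
  then have "prob E \<le> measure M {w\<in>space M. softmax1 A (Suc k) w \<le> m \<and> m < softmax1 A k w}"
    using sub by (rule finite_measure_mono[rotated])
  then show ?thesis using pE by simp
qed

lemma main:
  assumes k: "k \<ge> 2"
  shows "(\<exists>t. entropy_max_threshold M A k t)
       \<and> (\<exists>t. entropy_max_threshold M A (k + 1) t)
       \<and> (\<forall>t1 t2. entropy_max_threshold M A k t1 \<longrightarrow> entropy_max_threshold M A (k + 1) t2 \<longrightarrow> t2 < t1)"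
proof (intro conjI allI impI)
  have k': "Suc k \<ge> 2" using k by simp
  show "\<exists>t. entropy_max_threshold M A k t" using median_exists[OF k] maxchar[OF k] by blast
  show "\<exists>t. entropy_max_threshold M A (k + 1) t" using median_exists[OF k'] maxchar[OF k'] by simp
  fix t1 t2 assume h1: "entropy_max_threshold M A k t1" and h2: "entropy_max_threshold M A (k + 1) t2"
  then have q1: "q k t1 = 1/2" and q2: "q (Suc k) t2 = 1/2" using maxchar[OF k] maxchar[OF k'] by auto
  have mk[measurable]: "softmax1 A k \<in> borel_measurable M" and mk'[measurable]: "softmax1 A (Suc k) \<in> borel_measurable M"
    by (rule Sm)+
  have t1: "0 < t1 \<and> t1 < 1"
  proof (rule ccontr)
    assume "\<not> (0 < t1 \<and> t1 < 1)"
    then consider "t1 \<le> 0" | "t1 \<ge> 1" by linarith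
    then show False
    proof cases
      case 1
      then have "{w\<in>space M. softmax1 A k w \<le> t1} = {}" using S_bounds[OF k, THEN conjunct1]
        by (auto simp: not_le intro: le_less_trans)
      then show False using q1 by (metis measure_empty zero_neq_numeral divide_eq_0_iff one_neq_zero)
    next
      case 2
      have "softmax1 A k w \<le> t1" for w using S_bounds[OF k, of w] 2 by linarith
      then have "{w\<in>space M. softmax1 A k w \<le> t1} = space M" by auto
      then show False using q1 prob_space by simp
    qed
  qed
  show "t2 < t1"
  proof (rule ccontr)
    assume "\<not> t2 < t1"
    then have le: "t1 \<le> t2" by simp
    let ?G = "{w\<in>space M. softmax1 A (Suc k) w \<le> t1 \<and> t1 < softmax1 A k w}"
    let ?F = "{w\<in>space M. softmax1 A k w \<le> t1}"
    have "?F \<union> ?G \<subseteq> {w\<in>space M. softmax1 A (Suc k) w \<le> t2}"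
    proof
      fix w assume "w \<in> ?F \<union> ?G"
      then show "w \<in> {w\<in>space M. softmax1 A (Suc k) w \<le> t2}" using S_mono[OF k, of w] le by auto
    qed
    then have "measure M (?F \<union> ?G) \<le> q (Suc k) t2"
      by (intro finite_measure_mono) auto
    moreover have "measure M (?F \<union> ?G) = q k t1 + measure M ?G"
      by (rule finite_measure_Union) auto
    moreover have "measure M ?G > 0" using gap_pos[OF k] t1 by auto
    ultimately show False using q1 q2 by simp
  qed
qed

end

theorem theorem1:
  fixes M :: "'a measure" and A :: "nat \<Rightarrow> 'a \<Rightarrow> real" and \<mu> \<sigma> :: real and k :: nat
  assumes "prob_space M"
    and "\<sigma> > 0"
    and "prob_space.indep_vars M (\<lambda>_. borel) A {1..}"
    and "\<And>i. i \<ge> 1 \<Longrightarrow> distributed M lborel (A i) (\<lambda>x. ennreal (normal_density \<mu> \<sigma> x))"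
    and "k \<ge> 2"
  shows "(\<exists>t. entropy_max_threshold M A k t)
       \<and> (\<exists>t. entropy_max_threshold M A (k + 1) t)
       \<and> (\<forall>t1 t2. entropy_max_threshold M A k t1 \<longrightarrow> entropy_max_threshold M A (k + 1) t2 \<longrightarrow> t2 < t1)"
    using main[OF assms(1) assms(2) assms(3) assms(4) assms(5)] .

end
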